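(* Let $r\ge 2$, $0\le s<r/2$, $n=\frac{r(r+1)}2+s$, and fix a line $L\subset\mathbb{P}^2$. If $\Gamma\in\mathbb{P}^{2[n]}$ is general, then there exists $\Gamma''\in L^{[r-1]}$ such that $\Gamma\cup\Gamma''$ lies on a pencil of plane curves of degree $r$, i.e. $h^0(\mathcal{I}_{\Gamma\cup\Gamma''}(r))\ge 2$.
   Context: Over $\mathbb{C}$. $\mathbb{P}^{2[n]}$ is the Hilbert scheme of length-$n$ zero-dimensional subschemes of $\mathbb{P}^2$ and $L^{[r-1]}$ the Hilbert scheme of length-$(r-1)$ subschemes of $L$. *)

theory Defs
  imports Complex_Main "HOL-Library.Poly_Mapping"
begin

(* Homogeneous coordinates of points of P^2 (over the complex numbers). *)
type_synonym pt3 = "complex \<times> complex \<times> complex"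

definition comb :: "complex \<Rightarrow> pt3 \<Rightarrow> complex \<Rightarrow> pt3 \<Rightarrow> pt3" where
  "comb a p b q = (a * fst p + b * fst q,
                   a * fst (snd p) + b * fst (snd q),
                   a * snd (snd p) + b * snd (snd q))"

(* p, q linearly independent in C^3, so that they span a line L in P^2 *)
definition lin_indep3 :: "pt3 \<Rightarrow> pt3 \<Rightarrow> bool" where
  "lin_indep3 p q \<longleftrightarrow> (\<forall>a b. comb a p b q = (0, 0, 0) \<longrightarrow> a = 0 \<and> b = 0)"

(* Ternary forms of degree r: c i j is the coefficient of x^i y^j z^(r-i-j). *)
definition is_tform :: "nat \<Rightarrow> (nat \<Rightarrow> nat \<Rightarrow> complex) \<Rightarrow> bool" where
  "is_tform r c \<longleftrightarrow> (\<forall>i j. r < i + j \<longrightarrow> c i j = 0)"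

definition tform_eval :: "nat \<Rightarrow> (nat \<Rightarrow> nat \<Rightarrow> complex) \<Rightarrow> pt3 \<Rightarrow> complex" where
  "tform_eval r c v = (case v of (x, y, z) \<Rightarrow>
      (\<Sum>i\<le>r. \<Sum>j\<le>r - i. c i j * x ^ i * y ^ j * z ^ (r - i - j)))"

definition bform_eval :: "nat \<Rightarrow> (nat \<Rightarrow> complex) \<Rightarrow> complex \<Rightarrow> complex \<Rightarrow> complex" where
  "bform_eval d g s t = (\<Sum>k\<le>d. g k * s ^ k * t ^ (d - k))"

definition nonzero_bform :: "nat \<Rightarrow> (nat \<Rightarrow> complex) \<Rightarrow> bool" where
  "nonzero_bform d g \<longleftrightarrow> (\<exists>k\<le>d. g k \<noteq> 0)"

(* The form c vanishes on the reduced points (x_i : y_i : 1), i < n (the scheme Gamma). *)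
definition vanishes_on_pts :: "nat \<Rightarrow> (nat \<Rightarrow> nat \<Rightarrow> complex) \<Rightarrow> nat \<Rightarrow> (nat \<Rightarrow> complex \<times> complex) \<Rightarrow> bool" where
  "vanishes_on_pts r c n \<gamma> \<longleftrightarrow> (\<forall>i<n. tform_eval r c (fst (\<gamma> i), snd (\<gamma> i), 1) = 0)"

(* Gamma'' in L^[d]: the length-d subscheme of L = span(p,q) cut out by the nonzero binary
   form g of degree d in the parameters (s,t) of L.  A degree-r form c lies in the ideal of
   Gamma'' iff its restriction c(s p + t q) is divisible by g, i.e. equals g * h with h a
   binary form of degree r - d.  Here d = r - 1, so h is linear. *)
definition in_ideal_line_scheme :: "nat \<Rightarrow> (nat \<Rightarrow> nat \<Rightarrow> complex) \<Rightarrow> pt3 \<Rightarrow> pt3 \<Rightarrow> (nat \<Rightarrow> complex) \<Rightarrow> bool" where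
  "in_ideal_line_scheme r c p q g \<longleftrightarrow>
     (\<exists>h0 h1. \<forall>s t. tform_eval r c (comb s p t q) = bform_eval (r - 1) g s t * (h0 * s + h1 * t))"

(* h^0(I_{Gamma \<union> Gamma''}(r)) \<ge> 2: two linearly independent degree-r forms in
   I_Gamma \<inter> I_Gamma'' *)
definition h0_ideal_ge_2 :: "nat \<Rightarrow> nat \<Rightarrow> (nat \<Rightarrow> complex \<times> complex) \<Rightarrow> pt3 \<Rightarrow> pt3 \<Rightarrow> (nat \<Rightarrow> complex) \<Rightarrow> bool" where
  "h0_ideal_ge_2 r n \<gamma> p q g \<longleftrightarrow>
     (\<exists>c1 c2. is_tform r c1 \<and> is_tform r c2 \<and>
        (\<forall>a b. (\<forall>i j. a * c1 i j + b * c2 i j = 0) \<longrightarrow> a = 0 \<and> b = 0) \<and>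
        vanishes_on_pts r c1 n \<gamma> \<and> vanishes_on_pts r c2 n \<gamma> \<and>
        in_ideal_line_scheme r c1 p q g \<and> in_ideal_line_scheme r c2 p q g)"

(* Multivariate polynomials over C as finitely supported maps from monomials to coefficients *)
definition mpoly_eval :: "((nat \<Rightarrow>\<^sub>0 nat) \<Rightarrow>\<^sub>0 complex) \<Rightarrow> (nat \<Rightarrow> complex) \<Rightarrow> complex" where
  "mpoly_eval P x = (\<Sum>m\<in>Poly_Mapping.keys P. Poly_Mapping.lookup P m * (\<Prod>v::nat\<in>Poly_Mapping.keys m. x v ^ Poly_Mapping.lookup m v))"

definition mpoly_vars :: "((nat \<Rightarrow>\<^sub>0 nat) \<Rightarrow>\<^sub>0 complex) \<Rightarrow> nat set" where
  "mpoly_vars P = \<Union> (Poly_Mapping.keys ` Poly_Mapping.keys P)"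

(* "Q holds for a general Gamma in P^2[n]": there is a nonzero polynomial P in the 2n affine
   coordinates of n points such that Q holds whenever P does not vanish.  *)
definition general_pts :: "nat \<Rightarrow> ((nat \<Rightarrow> complex \<times> complex) \<Rightarrow> bool) \<Rightarrow> bool" where
  "general_pts n Q \<longleftrightarrow>
     (\<exists>P. P \<noteq> 0 \<and> mpoly_vars P \<subseteq> {..<2 * n} \<and>
        (\<forall>\<gamma>. mpoly_eval P (\<lambda>v. if even v then fst (\<gamma> (v div 2)) else snd (\<gamma> (v div 2))) \<noteq> 0
              \<longrightarrow> Q \<gamma>))"

end

theory Submission
  imports Defs "HOL-Computational_Algebra.Polynomial"
begin


definition Pc :: "nat \<Rightarrow> (nat\<Rightarrow>nat\<Rightarrow>complex) \<Rightarrow> pt3 \<Rightarrow> pt3 \<Rightarrow> complex poly" where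
"Pc r c p q = (\<Sum>i\<le>r. \<Sum>j\<le>r-i. smult (c i j) ([:fst q, fst p:]^i * [:fst (snd q), fst (snd p):]^j * [:snd (snd q), snd (snd p):]^(r-i-j)))"

lemma Pc_A:
  assumes "t \<noteq> 0"
  shows "tform_eval r c (comb s p t q) = t^r * poly (Pc r c p q) (s/t)"
proof -
  obtain p1 p2 p3 where p: "p = (p1,p2,p3)" by (cases p) auto
  obtain q1 q2 q3 where q: "q = (q1,q2,q3)" by (cases q) auto
  have lin: "\<And>a b. s*a + t*b = t * (b + s/t*a)" using assms by (simp add: field_simps)
  have key: "\<And>i j. i \<le> r \<Longrightarrow> j \<le> r - i \<Longrightarrow>
     c i j * (s*p1+t*q1)^i * (s*p2+t*q2)^j * (s*p3+t*q3)^(r-i-j)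
     = t^r * (c i j * (poly [:q1,p1:] (s/t)^i * poly [:q2,p2:] (s/t)^j * poly [:q3,p3:] (s/t)^(r-i-j)))"
  proof -
    fix i j assume ij: "i \<le> r" "j \<le> r - i"
    have tr: "t^r = t^i * t^j * t^(r-i-j)"
      by (metis ij add_diff_inverse_nat diff_diff_left le_diff_conv2 not_le power_add add.commute)
    show "?thesis i j" unfolding lin tr by (simp add: power_mult_distrib mult.commute)
  qed
  show ?thesis
    unfolding tform_eval_def comb_def Pc_def p q
    apply (simp only: poly_sum poly_smult poly_mult poly_power sum_distrib_left prod.case fst_conv snd_conv)
    apply (intro sum.cong refl)
    apply (rule key) apply auto done
qed

lemma Pc_deg: "degree (Pc r c p q) \<le> r"
  unfolding Pc_def
  apply (rule degree_sum_le) apply simp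
  apply (rule degree_sum_le) apply simp
proof -
  fix i j assume ij: "i \<in> {..r}" "j \<in> {..r-i}"
  have "degree ([:fst q, fst p:]^i * [:fst (snd q), fst (snd p):]^j * [:snd (snd q), snd (snd p):]^(r-i-j)) \<le> i + j + (r-i-j)"
    by (intro order.trans[OF degree_mult_le] add_mono order.trans[OF degree_power_le]) auto
  also have "\<dots> = r" using ij by auto
  finally show "degree (smult (c i j) ([:fst q, fst p:]^i * [:fst (snd q), fst (snd p):]^j * [:snd (snd q), snd (snd p):]^(r-i-j))) \<le> r"
    using degree_smult_le order.trans by blast
qed

lemma bform_poly:
  assumes "degree P \<le> r" "t \<noteq> 0"
  shows "bform_eval r (coeff P) s t = t^r * poly P (s/t)"
proof -
  have "poly P (s/t) = (\<Sum>k\<le>r. coeff P k * (s/t)^k)"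
    unfolding poly_altdef
    by (rule sum.mono_neutral_left) (use assms le_degree in auto)
  moreover have m: "\<And>k. k \<le> r \<Longrightarrow> t^r * (coeff P k * (s/t)^k) = coeff P k * s^k * t^(r-k)"
  proof -
    fix k assume "k \<le> r"
    then have "t^r = t^k * t^(r-k)" by (simp flip: power_add)
    then show "?thesis k" using assms by (simp add: power_divide field_simps)
  qed
  ultimately show ?thesis unfolding bform_eval_def
    apply (simp only: sum_distrib_left)
    apply (rule sum.cong[OF refl])
    apply (rule m[symmetric]) by simp
qed

lemma cont_eq0:
  fixes f g :: "complex \<Rightarrow> complex"
  assumes "continuous_on UNIV f" "continuous_on UNIV g" "\<And>t. t \<noteq> 0 \<Longrightarrow> f t = g t"
  shows "f 0 = g 0"
proof -
  have f: "(f \<longlongrightarrow> f 0) (at 0)" using assms(1) by (simp add: continuous_on_def)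
  have g: "(g \<longlongrightarrow> g 0) (at 0)" using assms(2) by (simp add: continuous_on_def)
  have "eventually (\<lambda>t. f t = g t) (at 0)" using assms(3) eventually_at_filter by (auto simp: eventually_at_filter)
  then have "(g \<longlongrightarrow> f 0) (at 0)" using f tendsto_cong by blast
  then show ?thesis using g tendsto_unique at_neq_bot by blast
qed

lemma restr: "tform_eval r c (comb s p t q) = bform_eval r (coeff (Pc r c p q)) s t"
proof (cases "t = 0")
  case False then show ?thesis using Pc_A bform_poly Pc_deg by metis
next
  case True
  have "(\<lambda>t. tform_eval r c (comb s p t q)) 0 = (\<lambda>t. bform_eval r (coeff (Pc r c p q)) s t) 0"
    apply (rule cont_eq0)
    subgoal unfolding tform_eval_def comb_def by (auto intro!: continuous_intros)
    subgoal unfolding bform_eval_def by (auto intro!: continuous_intros)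
    subgoal using Pc_A bform_poly Pc_deg by metis
    done
  then show ?thesis using True by simp
qed




lemma kernel_mat:
  fixes A :: "'b \<Rightarrow> 'a \<Rightarrow> 'c::field"
  assumes "finite Rw"
  shows "finite I \<Longrightarrow> card Rw < card I \<Longrightarrow>
     \<exists>x. (\<exists>u\<in>I. x u \<noteq> 0) \<and> (\<forall>w\<in>Rw. (\<Sum>u\<in>I. A w u * x u) = 0)"
  using assms
proof (induction Rw arbitrary: I A rule: finite_induct)
  case empty
  then obtain u where "u \<in> I" by fastforce
  then show ?case by (intro exI[of _ "\<lambda>v. 1"]) auto
next
  case (insert w0 Rw)
  show ?case
  proof (cases "\<forall>i\<in>I. A w0 i = 0")
    case True
    have "card Rw < card I" using insert by simp
    then obtain x where "\<exists>u\<in>I. x u \<noteq> 0" "\<forall>w\<in>Rw. (\<Sum>u\<in>I. A w u * x u) = 0"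
      using insert by blast
    then show ?thesis using True by (intro exI[of _ x]) auto
  next
    case False
    then obtain j where j: "j \<in> I" "A w0 j \<noteq> 0" by auto
    define I' where "I' = I - {j}"
    define B where "B w i = A w i - A w j * A w0 i / A w0 j" for w i
    have fI': "finite I'" using insert I'_def by auto
    have "card I' = card I - 1" using j insert I'_def by auto
    then have "card Rw < card I'" using insert by simp
    then obtain y where y: "\<exists>u\<in>I'. y u \<noteq> 0" "\<forall>w\<in>Rw. (\<Sum>u\<in>I'. B w u * y u) = 0"
      using insert.IH[OF fI'] insert by blast
    define x where "x u = (if u = j then - (\<Sum>i\<in>I'. A w0 i * y i) / A w0 j else y u)" for u
    have split: "\<And>f. (\<Sum>u\<in>I. f u) = f j + (\<Sum>u\<in>I'. f u)"
      using j insert I'_def by (simp add: sum.remove)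
    have xI': "\<And>u. u \<in> I' \<Longrightarrow> x u = y u" using I'_def x_def by auto
    have row0: "(\<Sum>u\<in>I. A w0 u * x u) = 0"
      unfolding split using xI' j by (simp add: x_def)
    have rowk: "(\<Sum>u\<in>I. A w u * x u) = 0" if "w \<in> Rw" for w
    proof -
      have "(\<Sum>u\<in>I. A w u * x u) = A w j * x j + (\<Sum>u\<in>I'. A w u * y u)"
        unfolding split using xI' by simp
      also have "\<dots> = (\<Sum>u\<in>I'. B w u * y u)"
        using j by (simp add: x_def B_def algebra_simps sum_subtractf sum_distrib_left sum_divide_distrib)
      also have "\<dots> = 0" using y that by auto
      finally show ?thesis .
    qed
    show ?thesis
      using row0 rowk y(1) xI' I'_def by (intro exI[of _ x]) auto
  qed
qed

lemma kernel_fun: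
  fixes f :: "'b \<Rightarrow> ('a \<Rightarrow> 'c::field) \<Rightarrow> 'c"
  assumes "finite Rw" "finite I" "card Rw < card I"
    and lin: "\<And>w a b x y. w \<in> Rw \<Longrightarrow> f w (\<lambda>u. a * x u + b * y u) = a * f w x + b * f w y"
    and loc: "\<And>w x y. w \<in> Rw \<Longrightarrow> (\<And>u. u \<in> I \<Longrightarrow> x u = y u) \<Longrightarrow> f w x = f w y"
  shows "\<exists>x. (\<exists>u\<in>I. x u \<noteq> 0) \<and> (\<forall>w\<in>Rw. f w x = 0)"
proof -
  define e where "e v = (\<lambda>u::'a. if u = v then 1 else 0::'c)" for v
  define A where "A w v = f w (e v)" for w v
  have zero: "f w (\<lambda>u. 0) = 0" if "w \<in> Rw" for w
    using lin[OF that, of 0 "\<lambda>u. 0" 0 "\<lambda>u. 0"] by simp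
  have sumf: "finite J \<Longrightarrow> f w (\<lambda>u. \<Sum>v\<in>J. x v * e v u) = (\<Sum>v\<in>J. x v * A w v)" if "w \<in> Rw" for w x J
  proof (induction J rule: finite_induct)
    case empty then show ?case using zero[OF that] by simp
  next
    case (insert v J)
    have "f w (\<lambda>u. \<Sum>v'\<in>insert v J. x v' * e v' u) = f w (\<lambda>u. x v * e v u + 1 * (\<Sum>v'\<in>J. x v' * e v' u))"
      using insert by simp
    also have "\<dots> = x v * A w v + f w (\<lambda>u. \<Sum>v'\<in>J. x v' * e v' u)"
      using lin[OF that, of "x v" "e v" 1 "\<lambda>u. \<Sum>v'\<in>J. x v' * e v' u"] A_def by simp
    finally show ?case using insert by simp
  qed
  have rep: "f w x = (\<Sum>v\<in>I. A w v * x v)" if "w \<in> Rw" for w x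
  proof -
    have "f w x = f w (\<lambda>u. \<Sum>v\<in>I. x v * e v u)"
      using assms(2) by (intro loc[OF that]) (simp add: e_def if_distrib sum.delta cong: if_cong)
    also have "\<dots> = (\<Sum>v\<in>I. A w v * x v)" using sumf[OF that assms(2)] by (simp add: mult.commute)
    finally show ?thesis .
  qed
  obtain x where "\<exists>u\<in>I. x u \<noteq> 0" "\<forall>w\<in>Rw. (\<Sum>u\<in>I. A w u * x u) = 0"
    using kernel_mat[OF assms(1) assms(2,3)] by blast
  then show ?thesis using rep by auto
qed




definition shiftg :: "(nat \<Rightarrow> complex) \<Rightarrow> nat \<Rightarrow> complex" where
  "shiftg g k = (if k = 0 then 0 else g (k - 1))"

definition TT :: "nat \<Rightarrow> (nat \<times> nat) set" where
  "TT r = Sigma {..r} (\<lambda>i. {..r-i})"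

lemma TT_mem[simp]: "(i,j) \<in> TT r \<longleftrightarrow> i + j \<le> r"
  unfolding TT_def by auto

lemma TT_fin[simp]: "finite (TT r)" unfolding TT_def by auto

lemma TT_card: "2 * card (TT r) = (r+1)*(r+2)"
proof -
  have c: "card (TT r) = (\<Sum>i\<le>r. r - i + 1)" unfolding TT_def by simp
  have "2 * (\<Sum>i\<le>r. r - i + 1) = (r+1)*(r+2)"
  proof (induction r)
    case 0 then show ?case by simp
  next
    case (Suc r)
    have "(\<Sum>i\<le>Suc r. Suc r - i + 1) = (Suc r + 1) + (\<Sum>i\<le>r. r - i + 1)"
      by (simp only: sum.atMost_Suc_shift) simp
    then show ?case using Suc by simp
  qed
  then show ?thesis using c by simp
qed

lemma Pc_lin_coeff:
  "coeff (Pc r (\<lambda>i j. a * c1 i j + b * c2 i j) p q) k = a * coeff (Pc r c1 p q) k + b * coeff (Pc r c2 p q) k"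
  unfolding Pc_def coeff_sum coeff_smult
  by (simp add: sum_distrib_left sum.distrib algebra_simps)

lemma tform_lin:
  "tform_eval r (\<lambda>i j. a * c1 i j + b * c2 i j) v = a * tform_eval r c1 v + b * tform_eval r c2 v"
  unfolding tform_eval_def
  by (cases v) (simp add: sum_distrib_left sum.distrib algebra_simps)

lemma indep_coeff:
  assumes "\<forall>i j. a * c1 i j + b * c2 i j = 0"
  shows "a * coeff (Pc r c1 p q) k + b * coeff (Pc r c2 p q) k = 0"
proof -
  have "(\<lambda>i j. a * c1 i j + b * c2 i j) = (\<lambda>i j. 0)" using assms by auto
  then have "coeff (Pc r (\<lambda>i j. a * c1 i j + b * c2 i j) p q) k = 0" by (simp add: Pc_def)
  then show ?thesis by (simp add: Pc_lin_coeff)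
qed

lemma bform_cong: "(\<And>k. k \<le> r \<Longrightarrow> f k = f' k) \<Longrightarrow> bform_eval r f s t = bform_eval r f' s t"
  unfolding bform_eval_def by (intro sum.cong) auto

lemma bform_shift: "1 \<le> r \<Longrightarrow> bform_eval r (shiftg g) s t = bform_eval (r-1) g s t * s"
proof -
  assume "1 \<le> r"
  then obtain m where m: "r = Suc m" by (cases r) auto
  have "bform_eval r (shiftg g) s t = (\<Sum>k\<le>m. g k * s ^ Suc k * t ^ (m - k))"
    unfolding bform_eval_def m by (simp only: sum.atMost_Suc_shift) (simp add: shiftg_def)
  also have "\<dots> = bform_eval (r-1) g s t * s"
    unfolding bform_eval_def m by (simp add: sum_distrib_right sum_distrib_left algebra_simps)
  finally show ?thesis .
qed

lemma bform_t: "1 \<le> r \<Longrightarrow> g r = 0 \<Longrightarrow> bform_eval r g s t = bform_eval (r-1) g s t * t"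
proof -
  assume "1 \<le> r" "g r = 0"
  then obtain m where m: "r = Suc m" by (cases r) auto
  have "bform_eval r g s t = (\<Sum>k\<le>m. g k * s ^ k * t ^ (Suc m - k))"
    unfolding bform_eval_def m using \<open>g r = 0\<close> m by simp
  also have "\<dots> = (\<Sum>k\<le>m. g k * s ^ k * t ^ (m - k) * t)"
    by (intro sum.cong refl) (simp add: Suc_diff_le)
  also have "\<dots> = bform_eval (r-1) g s t * t"
    unfolding bform_eval_def m by (simp add: sum_distrib_right)
  finally show ?thesis .
qed

lemma ideal_s:
  assumes "1 \<le> r" "\<And>k. k \<le> r \<Longrightarrow> coeff (Pc r c p q) k = shiftg g k"
  shows "in_ideal_line_scheme r c p q g"
  unfolding in_ideal_line_scheme_def
proof (rule exI[of _ "1::complex"], rule exI[of _ "0::complex"], intro allI)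
  fix s t
  show "tform_eval r c (comb s p t q) = bform_eval (r - 1) g s t * (1 * s + 0 * t)"
    using restr bform_cong[OF assms(2)] bform_shift[OF assms(1)] by simp
qed

lemma ideal_t:
  assumes "1 \<le> r" "g r = 0" "\<And>k. k \<le> r \<Longrightarrow> coeff (Pc r c p q) k = g k"
  shows "in_ideal_line_scheme r c p q g"
  unfolding in_ideal_line_scheme_def
proof (rule exI[of _ "0::complex"], rule exI[of _ "1::complex"], intro allI)
  fix s t
  show "tform_eval r c (comb s p t q) = bform_eval (r - 1) g s t * (0 * s + 1 * t)"
    using restr bform_cong[OF assms(3)] bform_t[of r g, OF assms(1,2)] by simp
qed

lemma ideal_0:
  assumes "\<And>k. k \<le> r \<Longrightarrow> coeff (Pc r c p q) k = 0"
  shows "in_ideal_line_scheme r c p q g"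
  unfolding in_ideal_line_scheme_def
proof (rule exI[of _ "0::complex"], rule exI[of _ "0::complex"], intro allI)
  fix s t
  show "tform_eval r c (comb s p t q) = bform_eval (r - 1) g s t * (0 * s + 0 * t)"
  proof -
    have "bform_eval r (coeff (Pc r c p q)) s t = bform_eval r (\<lambda>k. 0) s t"
      by (rule bform_cong) (use assms in simp)
    then show ?thesis using restr by (simp add: bform_eval_def)
  qed
qed

lemma least_nz:
  fixes g :: "nat \<Rightarrow> complex"
  assumes "g k0 \<noteq> 0"
  obtains m where "g m \<noteq> 0" "\<And>k. k < m \<Longrightarrow> g k = 0" "m \<le> k0"
proof -
  define m where "m = (LEAST k. g k \<noteq> 0)"
  have "g m \<noteq> 0" unfolding m_def using assms by (rule LeastI[of "\<lambda>k. g k \<noteq> 0"])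
  moreover have "\<And>k. k < m \<Longrightarrow> g k = 0" unfolding m_def using not_less_Least by blast
  moreover have "m \<le> k0" unfolding m_def using assms by (rule Least_le)
  ultimately show ?thesis using that by blast
qed

lemma indep_g:
  assumes "g m \<noteq> 0" "\<And>k. k < m \<Longrightarrow> g k = 0" "m + 1 \<le> r"
    "\<And>k. k \<le> r \<Longrightarrow> a * shiftg g k + b * g k = 0"
  shows "a = 0 \<and> b = 0"
proof -
  have "shiftg g m = 0" using assms(2) by (simp add: shiftg_def)
  then have "b * g m = 0" using assms(4)[of m] assms(3) by simp
  then have b: "b = 0" using assms(1) by simp
  have "a * g m + b * g (m+1) = 0" using assms(4)[of "m+1"] assms(3) by (simp add: shiftg_def)
  then show ?thesis using b assms(1) by simp
qed

lemma mpoly_one: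
  "Poly_Mapping.single 0 (1::complex) \<noteq> 0 \<and> mpoly_vars (Poly_Mapping.single 0 1) \<subseteq> A
   \<and> mpoly_eval (Poly_Mapping.single 0 1) x = 1"
  unfolding mpoly_vars_def mpoly_eval_def by simp




definition gx :: "nat \<Rightarrow> (nat \<times> nat \<times> nat \<Rightarrow> complex) \<Rightarrow> nat \<Rightarrow> complex" where
  "gx r x k = (if k < r then x (0,k,0) else 0)"
definition cx :: "nat \<Rightarrow> nat \<Rightarrow> (nat \<times> nat \<times> nat \<Rightarrow> complex) \<Rightarrow> nat \<Rightarrow> nat \<Rightarrow> complex" where
  "cx r m x i j = (if i + j \<le> r then x (m,i,j) else 0)"

lemma gx_lin: "gx r (\<lambda>u. a * x u + b * y u) = (\<lambda>k. a * gx r x k + b * gx r y k)"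
  by (auto simp: gx_def)
lemma cx_lin: "cx r m (\<lambda>u. a * x u + b * y u) = (\<lambda>i j. a * cx r m x i j + b * cx r m y i j)"
  by (intro ext) (auto simp: cx_def)
lemma shiftg_lin: "shiftg (\<lambda>k. a * g k + b * h k) k = a * shiftg g k + b * shiftg h k"
  by (simp add: shiftg_def)
lemma cx_tform: "is_tform r (cx r m x)" by (simp add: is_tform_def cx_def)

lemma gx_loc: "(\<And>k. k < r \<Longrightarrow> x (0,k,0) = y (0,k,0)) \<Longrightarrow> gx r x = gx r y"
  by (auto simp: gx_def)
lemma cx_loc: "(\<And>i j. i + j \<le> r \<Longrightarrow> x (m,i,j) = y (m,i,j)) \<Longrightarrow> cx r m x = cx r m y"
  by (intro ext) (auto simp: cx_def)

lemma shiftg_zero: "shiftg (\<lambda>k. 0) k = 0" by (simp add: shiftg_def)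




definition inK where
  "inK r n \<gamma> p q c \<longleftrightarrow> is_tform r c \<and> vanishes_on_pts r c n \<gamma> \<and> (\<forall>k\<le>r. coeff (Pc r c p q) k = 0)"

lemma caseA:
  assumes "inK r n \<gamma> p q c1" "inK r n \<gamma> p q c2"
    "\<forall>a b. (\<forall>i j. a * c1 i j + b * c2 i j = 0) \<longrightarrow> a = 0 \<and> b = 0"
  shows "\<exists>g. nonzero_bform (r-1) g \<and> h0_ideal_ge_2 r n \<gamma> p q g"
proof (intro exI[of _ "\<lambda>k. 1"] conjI)
  show "nonzero_bform (r - 1) (\<lambda>k. 1)" by (auto simp: nonzero_bform_def)
  show "h0_ideal_ge_2 r n \<gamma> p q (\<lambda>k. 1)"
    unfolding h0_ideal_ge_2_def
    using assms ideal_0 unfolding inK_def by blast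
qed

lemma card_ineqB:
  assumes "2*s < r" "n = r*(r+1) div 2 + s"
  shows "2*(r+1) + 2*n < r + 2 * card (TT r)"
proof -
  have e: "2 * (r*(r+1) div 2) = r*(r+1)" by simp
  have "2 * card (TT r) = (r+1)*(r+2)" by (rule TT_card)
  then show ?thesis using assms e by (simp add: algebra_simps)
qed

lemma card_ineqC:
  assumes "2 \<le> r" "2*s < r" "n = r*(r+1) div 2 + s"
  shows "(r+1) + n + 1 < r + card (TT r)"
proof -
  have e: "2 * (r*(r+1) div 2) = r*(r+1)" by simp
  have "2 * card (TT r) = (r+1)*(r+2)" by (rule TT_card)
  moreover have "s + 2 \<le> r" using assms by linarith
  ultimately show ?thesis using assms e by (simp add: algebra_simps)
qed




lemma caseB:
  assumes r2: "2 \<le> r" and rs: "2*s < r" and n: "n = r*(r+1) div 2 + s"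
    and K0: "\<forall>c. inK r n \<gamma> p q c \<longrightarrow> (\<forall>i j. c i j = 0)"
  shows "\<exists>g. nonzero_bform (r-1) g \<and> h0_ideal_ge_2 r n \<gamma> p q g"
proof -
  define pt where "pt i = (fst (\<gamma> i), snd (\<gamma> i), (1::complex))" for i
  define I where "I = ({0::nat}\<times>{..<r}\<times>{0::nat}) \<union> ({1}\<times>TT r) \<union> ({2}\<times>TT r)"
  define Rw where "Rw = ({0::nat}\<times>{..r}) \<union> ({1}\<times>{..r}) \<union> ({2}\<times>{..<n}) \<union> ({3}\<times>{..<n})"
  define f :: "nat \<times> nat \<Rightarrow> (nat \<times> nat \<times> nat \<Rightarrow> complex) \<Rightarrow> complex" where "f w x = (case w of (a,k) \<Rightarrow>
     if a = 0 then coeff (Pc r (cx r 1 x) p q) k - shiftg (gx r x) k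
     else if a = 1 then coeff (Pc r (cx r 2 x) p q) k - gx r x k
     else if a = 2 then tform_eval r (cx r 1 x) (pt k) else tform_eval r (cx r 2 x) (pt k))" for w x
  have finI: "finite I" by (simp add: I_def)
  have finR: "finite Rw" by (simp add: Rw_def)
  have cI: "card I = r + 2 * card (TT r)"
    unfolding I_def
    by (subst card_Un_disjoint, auto simp: card_cartesian_product)+
  have cR: "card Rw \<le> 2*(r+1) + 2*n"
  proof -
    have "card Rw \<le> card ({0::nat}\<times>{..r}) + card ({1::nat}\<times>{..r}) + card ({2::nat}\<times>{..<n}) + card ({3::nat}\<times>{..<n})"
      unfolding Rw_def by (meson add_le_mono card_Un_le le_trans order_refl)
    then show ?thesis by (simp add: card_cartesian_product)
  qed
  have lt: "card Rw < card I" using cI cR card_ineqB[OF rs n] by linarith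
  have lin: "f w (\<lambda>u. a * x u + b * y u) = a * f w x + b * f w y" for w a b x y
    by (cases w) (simp add: f_def gx_lin cx_lin shiftg_lin Pc_lin_coeff tform_lin algebra_simps)
  have loc: "f w x = f w y" if "\<And>u. u \<in> I \<Longrightarrow> x u = y u" for w x y
  proof -
    have "gx r x = gx r y" by (rule gx_loc) (use that in \<open>auto simp: I_def\<close>)
    moreover have "cx r 1 x = cx r 1 y" by (rule cx_loc) (use that in \<open>auto simp: I_def\<close>)
    moreover have "cx r 2 x = cx r 2 y" by (rule cx_loc) (use that in \<open>auto simp: I_def\<close>)
    ultimately show ?thesis unfolding f_def by (simp only:)
  qed
  obtain x where xnz: "\<exists>u\<in>I. x u \<noteq> 0" and xsol: "\<forall>w\<in>Rw. f w x = 0"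
    using kernel_fun[OF finR finI lt, of f] lin loc by blast
  define g where "g = gx r x"
  define c1 where "c1 = cx r 1 x"
  define c2 where "c2 = cx r 2 x"
  have e1: "coeff (Pc r c1 p q) k = shiftg g k" if "k \<le> r" for k
    using xsol that unfolding Rw_def f_def g_def c1_def by force
  have e2: "coeff (Pc r c2 p q) k = g k" if "k \<le> r" for k
    using xsol that unfolding Rw_def f_def g_def c2_def by force
  have v1: "vanishes_on_pts r c1 n \<gamma>"
    using xsol unfolding vanishes_on_pts_def Rw_def f_def c1_def pt_def by force
  have v2: "vanishes_on_pts r c2 n \<gamma>"
    using xsol unfolding vanishes_on_pts_def Rw_def f_def c2_def pt_def by force
  have gnz: "\<exists>k<r. g k \<noteq> 0"
  proof (rule ccontr)
    assume "\<not> (\<exists>k<r. g k \<noteq> 0)"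
    then have g0: "g = (\<lambda>k. 0)" by (auto simp: g_def gx_def)
    have "inK r n \<gamma> p q c1" unfolding inK_def using cx_tform v1 e1 g0 shiftg_zero c1_def by simp
    then have z1: "\<forall>i j. c1 i j = 0" using K0 by blast
    have "inK r n \<gamma> p q c2" unfolding inK_def using cx_tform v2 e2 g0 c2_def by simp
    then have z2: "\<forall>i j. c2 i j = 0" using K0 by blast
    have "\<forall>u\<in>I. x u = 0"
    proof
      fix u assume "u \<in> I"
      then show "x u = 0" unfolding I_def
      proof (elim UnE)
        assume "u \<in> {0::nat}\<times>{..<r}\<times>{0::nat}"
        then obtain a where a: "u = (0,a,0)" "a < r" by auto
        have "g a = 0" using g0 by simp
        then show ?thesis using a by (simp add: g_def gx_def)
      next
        assume "u \<in> {1}\<times>TT r"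
        then obtain i j where "u = (1,i,j)" "i+j \<le> r" by auto
        then show ?thesis using z1 unfolding c1_def cx_def by (metis)
      next
        assume "u \<in> {2}\<times>TT r"
        then obtain i j where "u = (2,i,j)" "i+j \<le> r" by auto
        then show ?thesis using z2 unfolding c2_def cx_def by (metis)
      qed
    qed
    then show False using xnz by blast
  qed
  then obtain k0 where k0: "k0 < r" "g k0 \<noteq> 0" by blast
  obtain m where m: "g m \<noteq> 0" "\<And>k. k < m \<Longrightarrow> g k = 0" "m \<le> k0"
    using least_nz[of g k0] k0(2) by blast
  have gr: "g r = 0" by (simp add: g_def gx_def)
  have r1: "1 \<le> r" using r2 by simp
  show ?thesis
  proof (intro exI[of _ g] conjI)
    show "nonzero_bform (r - 1) g" unfolding nonzero_bform_def using k0 by (intro exI[of _ k0]) auto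
    show "h0_ideal_ge_2 r n \<gamma> p q g"
      unfolding h0_ideal_ge_2_def
    proof (rule exI[of _ c1], rule exI[of _ c2], intro conjI allI impI)
      show "is_tform r c1" "is_tform r c2" unfolding c1_def c2_def by (rule cx_tform)+
      show "vanishes_on_pts r c1 n \<gamma>" "vanishes_on_pts r c2 n \<gamma>" by (fact v1, fact v2)
      show "in_ideal_line_scheme r c1 p q g" by (rule ideal_s[OF r1 e1])
      show "in_ideal_line_scheme r c2 p q g" by (rule ideal_t[OF r1 gr e2])
      fix a b assume ab: "\<forall>i j. a * c1 i j + b * c2 i j = 0"
      have "a = 0 \<and> b = 0"
      proof (rule indep_g[of g m, OF m(1,2)])
        show "m + 1 \<le> r" using m k0 by simp
        fix k assume "k \<le> r"
        then show "a * shiftg g k + b * g k = 0" using indep_coeff[OF ab, of r p q k] e1 e2 by simp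
      qed
      then show "a = 0" "b = 0" by auto
    qed
  qed
qed




lemma caseC:
  assumes r2: "2 \<le> r" and rs: "2*s < r" and n: "n = r*(r+1) div 2 + s"
    and k0K: "inK r n \<gamma> p q k0" and k0nz: "k0 i0 j0 \<noteq> 0"
    and mult: "\<And>c. inK r n \<gamma> p q c \<Longrightarrow> \<exists>\<mu>. \<forall>i j. c i j = \<mu> * k0 i j"
  shows "\<exists>g. nonzero_bform (r-1) g \<and> h0_ideal_ge_2 r n \<gamma> p q g"
proof -
  define pt where "pt i = (fst (\<gamma> i), snd (\<gamma> i), (1::complex))" for i
  define I where "I = ({0::nat}\<times>{..<r}\<times>{0::nat}) \<union> ({1}\<times>TT r)"
  define Rw where "Rw = ({0::nat}\<times>{..r}) \<union> ({2}\<times>{..<n}) \<union> ({4}\<times>{0})"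
  define f :: "nat \<times> nat \<Rightarrow> (nat \<times> nat \<times> nat \<Rightarrow> complex) \<Rightarrow> complex" where "f w x = (case w of (a,k) \<Rightarrow>
     if a = 0 then coeff (Pc r (cx r 1 x) p q) k - shiftg (gx r x) k
     else if a = 2 then tform_eval r (cx r 1 x) (pt k) else cx r 1 x i0 j0)" for w x
  have finI: "finite I" by (simp add: I_def)
  have finR: "finite Rw" by (simp add: Rw_def)
  have cI: "card I = r + card (TT r)"
    unfolding I_def
    by (subst card_Un_disjoint, auto simp: card_cartesian_product)+
  have cR: "card Rw \<le> (r+1) + n + 1"
  proof -
    have "card Rw \<le> card ({0::nat}\<times>{..r}) + card ({2::nat}\<times>{..<n}) + card ({4::nat}\<times>{0::nat})"
      unfolding Rw_def by (meson add_le_mono card_Un_le le_trans order_refl)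
    then show ?thesis by (simp add: card_cartesian_product)
  qed
  have lt: "card Rw < card I" using cI cR card_ineqC[OF r2 rs n] by linarith
  have lin: "f w (\<lambda>u. a * x u + b * y u) = a * f w x + b * f w y" for w a b x y
    by (cases w) (simp add: f_def gx_lin cx_lin shiftg_lin Pc_lin_coeff tform_lin algebra_simps)
  have loc: "f w x = f w y" if "\<And>u. u \<in> I \<Longrightarrow> x u = y u" for w x y
  proof -
    have "gx r x = gx r y" by (rule gx_loc) (use that in \<open>auto simp: I_def\<close>)
    moreover have "cx r 1 x = cx r 1 y" by (rule cx_loc) (use that in \<open>auto simp: I_def\<close>)
    ultimately show ?thesis unfolding f_def by (simp only:)
  qed
  obtain x where xnz: "\<exists>u\<in>I. x u \<noteq> 0" and xsol: "\<forall>w\<in>Rw. f w x = 0"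
    using kernel_fun[OF finR finI lt, of f] lin loc by blast
  define g where "g = gx r x"
  define c1 where "c1 = cx r 1 x"
  have e1: "coeff (Pc r c1 p q) k = shiftg g k" if "k \<le> r" for k
    using xsol that unfolding Rw_def f_def g_def c1_def by force
  have v1: "vanishes_on_pts r c1 n \<gamma>"
    using xsol unfolding vanishes_on_pts_def Rw_def f_def c1_def pt_def by force
  have ph: "c1 i0 j0 = 0"
    using xsol unfolding Rw_def f_def c1_def by force
  have gnz: "\<exists>k<r. g k \<noteq> 0"
  proof (rule ccontr)
    assume "\<not> (\<exists>k<r. g k \<noteq> 0)"
    then have g0: "g = (\<lambda>k. 0)" by (auto simp: g_def gx_def)
    have "inK r n \<gamma> p q c1" unfolding inK_def using cx_tform v1 e1 g0 shiftg_zero c1_def by simp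
    then obtain \<mu> where mu: "\<forall>i j. c1 i j = \<mu> * k0 i j" using mult by blast
    then have "\<mu> = 0" using ph k0nz by simp
    then have z1: "\<forall>i j. c1 i j = 0" using mu by simp
    have "\<forall>u\<in>I. x u = 0"
    proof
      fix u assume "u \<in> I"
      then show "x u = 0" unfolding I_def
      proof (elim UnE)
        assume "u \<in> {0::nat}\<times>{..<r}\<times>{0::nat}"
        then obtain a where a: "u = (0,a,0)" "a < r" by auto
        have "g a = 0" using g0 by simp
        then show ?thesis using a by (simp add: g_def gx_def)
      next
        assume "u \<in> {1}\<times>TT r"
        then obtain i j where "u = (1,i,j)" "i+j \<le> r" by auto
        then show ?thesis using z1 unfolding c1_def cx_def by (metis)
      qed
    qed
    then show False using xnz by blast
  qed
  then obtain kk where kk: "kk < r" "g kk \<noteq> 0" by blast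
  have r1: "1 \<le> r" using r2 by simp
  have k0c: "coeff (Pc r k0 p q) k = 0" if "k \<le> r" for k using k0K that unfolding inK_def by blast
  show ?thesis
  proof (intro exI[of _ g] conjI)
    show "nonzero_bform (r - 1) g" unfolding nonzero_bform_def using kk by (intro exI[of _ kk]) auto
    show "h0_ideal_ge_2 r n \<gamma> p q g"
      unfolding h0_ideal_ge_2_def
    proof (rule exI[of _ k0], rule exI[of _ c1], intro conjI allI impI)
      show "is_tform r k0" "vanishes_on_pts r k0 n \<gamma>" using k0K unfolding inK_def by auto
      show "is_tform r c1" unfolding c1_def by (rule cx_tform)
      show "vanishes_on_pts r c1 n \<gamma>" by (fact v1)
      show "in_ideal_line_scheme r k0 p q g" by (rule ideal_0) (fact k0c)
      show "in_ideal_line_scheme r c1 p q g" by (rule ideal_s[OF r1 e1])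
      fix a b assume ab: "\<forall>i j. a * k0 i j + b * c1 i j = 0"
      have "b * g kk = 0"
        using indep_coeff[OF ab, of r p q "kk+1"] e1[of "kk+1"] k0c[of "kk+1"] kk
        by (simp add: shiftg_def)
      then have b: "b = 0" using kk by simp
      then have "a * k0 i0 j0 = 0" using ab[rule_format, of i0 j0] by simp
      then have "a = 0" using k0nz by simp
      then show "a = 0" "b = 0" using b by auto
    qed
  qed
qed


theorem mainTheorem19:
  fixes r s n :: nat and p q :: pt3
  assumes "2 \<le> r" and "2 * s < r" and "n = r * (r + 1) div 2 + s" and "lin_indep3 p q"
  shows "general_pts n (\<lambda>\<gamma>. \<exists>g. nonzero_bform (r - 1) g \<and> h0_ideal_ge_2 r n \<gamma> p q g)"
proof -
  have Q: "\<exists>g. nonzero_bform (r - 1) g \<and> h0_ideal_ge_2 r n \<gamma> p q g" for \<gamma>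
  proof (cases "\<exists>c1 c2. inK r n \<gamma> p q c1 \<and> inK r n \<gamma> p q c2 \<and>
                  (\<forall>a b. (\<forall>i j. a * c1 i j + b * c2 i j = 0) \<longrightarrow> a = 0 \<and> b = 0)")
    case True
    then obtain c1 c2 where "inK r n \<gamma> p q c1" "inK r n \<gamma> p q c2"
       "\<forall>a b. (\<forall>i j. a * c1 i j + b * c2 i j = 0) \<longrightarrow> a = 0 \<and> b = 0" by blast
    then show ?thesis by (rule caseA)
  next
    case nA: False
    show ?thesis
    proof (cases "\<forall>c. inK r n \<gamma> p q c \<longrightarrow> (\<forall>i j. c i j = 0)")
      case True
      then show ?thesis using caseB[OF assms(1-3)] by blast
    next
      case False
      then obtain k0 i0 j0 where k0: "inK r n \<gamma> p q k0" "k0 i0 j0 \<noteq> 0" by blast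
      have mult: "\<exists>\<mu>. \<forall>i j. c i j = \<mu> * k0 i j" if c: "inK r n \<gamma> p q c" for c
      proof -
        from nA k0(1) c obtain a b where ab: "\<forall>i j. a * k0 i j + b * c i j = 0" "\<not> (a = 0 \<and> b = 0)"
          by blast
        have b: "b \<noteq> 0"
        proof
          assume "b = 0"
          then have "a * k0 i0 j0 = 0" using ab(1)[rule_format, of i0 j0] by simp
          then have "a = 0" using k0(2) by simp
          then show False using ab(2) \<open>b = 0\<close> by simp
        qed
        show ?thesis
        proof (intro exI[of _ "- a / b"] allI)
          fix i j
          have "a * k0 i j + b * c i j = 0" using ab(1) by simp
          then show "c i j = - a / b * k0 i j" using b by (simp add: field_simps add_eq_0_iff)
        qed
      qed
      show ?thesis by (rule caseC[OF assms(1-3) k0 mult])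
    qed
  qed
  show ?thesis unfolding general_pts_def
    using mpoly_one Q by (intro exI[of _ "Poly_Mapping.single 0 1"]) auto
qed

end
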